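(* Let $W(x_1,\dots,x_n)$ be an invertible, non-degenerate, quasi-homogeneous polynomial with $2\sum_jw_j=d$, let $J_W^2\in G\subseteq\operatorname{SL}_W$, and let $V=x_0^2+W$, $V^\star=x_0^2+W^\star$. For subgroups $L\subseteq\operatorname{Aut}(V)$ write $L^\vee\subseteq\operatorname{Aut}(V^\star)$ for the Berglund--Hübsch dual. Then $G^\vee=G^\star[\sigma^\star,J_{W^\star}]$, $G[\sigma]^\vee=G^\star[J_{W^\star}]$, $G[\sigma J_W]^\vee=G^\star[\sigma^\star J_{W^\star}]$, $G[J_W]^\vee=G^\star[\sigma^\star]$, $G[\sigma,J_W]^\vee=G^\star$. In particular the inclusions $G\subseteq G[\sigma],G[\sigma J_W],G[J_W]\subseteq G[\sigma,J_W]$ (all injective) correspond to the reversed inclusions $G^\star\subseteq G^\star[J_{W^\star}],G^\star[\sigma^\star J_{W^\star}],G^\star[\sigma^\star]\subseteq G^\star[\sigma^\star,J_{W^\star}]$.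
   Context: Invertible: $W=\sum_i\prod_jx_j^{m_{i,j}}$ with invertible exponent matrix; quasi-homogeneous of weights $w_j$, degree $d$; non-degenerate. $W^\star=\sum_i\prod_jx_j^{m_{j,i}}$. $\operatorname{Aut}_W$: diagonal symmetries; $\operatorname{SL}_W=\operatorname{Aut}_W\cap\operatorname{SL}(n;\mathbb C)$; $J_W=(e^{2\pi iw_j/d})_j$. Subgroups of $\operatorname{Aut}_W$ (and $J_W$) are regarded as diagonal symmetries of $V$ fixing $x_0$; $\sigma=(-1,1,\dots,1)\in\operatorname{Aut}(V)$ and $\sigma^\star=(-1,1,\dots,1)\in\operatorname{Aut}(V^\star)$. $L[h_1,h_2]$ is the group generated by $L$ and $h_1,h_2$. Berglund--Hübsch duality for an invertible polynomial $P=\sum_i\prod_jx_j^{a_{i,j}}$ with inverse exponent matrix $(a^{i,j})$ and transpose $P^{\mathrm T}$: with $\bar\rho_k=(e^{2\pi ia^{k,j}})_j\in\operatorname{Aut}(P^{\mathrm T})$, the dual of $L\subseteq\operatorname{Aut}(P)$ is $\{\prod_k\bar\rho_k^{r_k}:\prod_kx_k^{r_k}\text{ is }L\text{-invariant}\}$, equal to the kernel of the Cartier dual $\operatorname{Aut}(P^{\mathrm T})=\widehat{\operatorname{Aut}(P)}\to\widehat L$ of the inclusion. This is applied to $P=V$ (exponent matrix $\operatorname{diag}(2,M)$, transpose $V^\star$) to define $L^\vee$, and to $P=W$ to define $G^\star:=$ dual of $G[J_W]$ in $\operatorname{Aut}_{W^\star}$. *)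

theory Defs
  imports Complex_Main
begin

text \<open>A diagonal symmetry is represented by its vector of diagonal entries
  g :: nat \<Rightarrow> complex; coordinates outside the variable index set are 1.
  Variables of W are x_1..x_n (indices {1..n}); x_0 (index 0) is the extra
  variable of V = x_0^2 + W.\<close>

definition dmul :: "(nat \<Rightarrow> complex) \<Rightarrow> (nat \<Rightarrow> complex) \<Rightarrow> (nat \<Rightarrow> complex)" where
  "dmul g h = (\<lambda>k. g k * h k)"

definition one_vec :: "nat \<Rightarrow> complex" where
  "one_vec = (\<lambda>_. 1)"

definition dinv :: "(nat \<Rightarrow> complex) \<Rightarrow> (nat \<Rightarrow> complex)" where
  "dinv g = (\<lambda>k. inverse (g k))"

definition is_subgroup :: "(nat \<Rightarrow> complex) set \<Rightarrow> bool" where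
  "is_subgroup H \<longleftrightarrow> one_vec \<in> H \<and> (\<forall>a\<in>H. \<forall>b\<in>H. dmul a b \<in> H) \<and> (\<forall>a\<in>H. dinv a \<in> H)"

text \<open>Group generated by a set S (L[h1,h2] = gen (L \<union> {h1,h2})).\<close>
definition gen :: "(nat \<Rightarrow> complex) set \<Rightarrow> (nat \<Rightarrow> complex) set" where
  "gen S = \<Inter>{H. is_subgroup H \<and> S \<subseteq> H}"

definition diag_act :: "(nat \<Rightarrow> complex) \<Rightarrow> (nat \<Rightarrow> complex) \<Rightarrow> (nat \<Rightarrow> complex)" where
  "diag_act g x = (\<lambda>j. g j * x j)"

definition polyfun :: "(nat \<Rightarrow> nat \<Rightarrow> nat) \<Rightarrow> nat set \<Rightarrow> (nat \<Rightarrow> complex) \<Rightarrow> complex" where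
  "polyfun A I x = (\<Sum>i\<in>I. \<Prod>j\<in>I. x j ^ A i j)"

definition pderivP :: "(nat \<Rightarrow> nat \<Rightarrow> nat) \<Rightarrow> nat set \<Rightarrow> nat \<Rightarrow> (nat \<Rightarrow> complex) \<Rightarrow> complex" where
  "pderivP A I j x = (\<Sum>i\<in>I. of_nat (A i j) * x j ^ (A i j - 1) * (\<Prod>k\<in>I - {j}. x k ^ A i k))"

definition nondegenerate :: "(nat \<Rightarrow> nat \<Rightarrow> nat) \<Rightarrow> nat set \<Rightarrow> bool" where
  "nondegenerate A I \<longleftrightarrow> (\<forall>x. (\<forall>j\<in>I. pderivP A I j x = 0) \<longrightarrow> (\<forall>j\<in>I. x j = 0))"

definition quasi_hom :: "(nat \<Rightarrow> nat \<Rightarrow> nat) \<Rightarrow> nat set \<Rightarrow> (nat \<Rightarrow> nat) \<Rightarrow> nat \<Rightarrow> bool" where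
  "quasi_hom A I w d \<longleftrightarrow> (\<forall>i\<in>I. (\<Sum>j\<in>I. A i j * w j) = d)"

definition is_inverse_exp :: "(nat \<Rightarrow> nat \<Rightarrow> nat) \<Rightarrow> nat set \<Rightarrow> (nat \<Rightarrow> nat \<Rightarrow> rat) \<Rightarrow> bool" where
  "is_inverse_exp A I B \<longleftrightarrow>
     (\<forall>i\<in>I. \<forall>j\<in>I. (\<Sum>k\<in>I. of_nat (A i k) * B k j) = (if i = j then 1 else 0)
                 \<and> (\<Sum>k\<in>I. B i k * of_nat (A k j)) = (if i = j then 1 else 0))"

definition invertible_exp :: "(nat \<Rightarrow> nat \<Rightarrow> nat) \<Rightarrow> nat set \<Rightarrow> bool" where
  "invertible_exp A I \<longleftrightarrow> (\<exists>B. is_inverse_exp A I B)"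

definition inv_exp :: "(nat \<Rightarrow> nat \<Rightarrow> nat) \<Rightarrow> nat set \<Rightarrow> nat \<Rightarrow> nat \<Rightarrow> rat" where
  "inv_exp A I = (SOME B. is_inverse_exp A I B)"

definition trans_exp :: "(nat \<Rightarrow> nat \<Rightarrow> nat) \<Rightarrow> nat \<Rightarrow> nat \<Rightarrow> nat" where
  "trans_exp A = (\<lambda>i j. A j i)"

text \<open>Exponent matrix of V = x_0^2 + W: diag(2, M).\<close>
definition Vmat :: "(nat \<Rightarrow> nat \<Rightarrow> nat) \<Rightarrow> nat \<Rightarrow> nat \<Rightarrow> nat" where
  "Vmat M = (\<lambda>i j. if i = 0 \<and> j = 0 then 2 else if i = 0 \<or> j = 0 then 0 else M i j)"

definition Aut :: "(nat \<Rightarrow> nat \<Rightarrow> nat) \<Rightarrow> nat set \<Rightarrow> (nat \<Rightarrow> complex) set" where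
  "Aut A I = {g. (\<forall>k. k \<notin> I \<longrightarrow> g k = 1) \<and> (\<forall>k\<in>I. g k \<noteq> 0)
                 \<and> (\<forall>x. polyfun A I (diag_act g x) = polyfun A I x)}"

definition SLgrp :: "(nat \<Rightarrow> nat \<Rightarrow> nat) \<Rightarrow> nat set \<Rightarrow> (nat \<Rightarrow> complex) set" where
  "SLgrp A I = {g \<in> Aut A I. (\<Prod>j\<in>I. g j) = 1}"

definition Jvec :: "(nat \<Rightarrow> real) \<Rightarrow> nat set \<Rightarrow> nat \<Rightarrow> complex" where
  "Jvec q I = (\<lambda>j. if j \<in> I then cis (2 * pi * q j) else 1)"

text \<open>The (unique, for invertible A) rational weights q with sum_j A i j q_j = 1.\<close>
definition rat_weights :: "(nat \<Rightarrow> nat \<Rightarrow> nat) \<Rightarrow> nat set \<Rightarrow> nat \<Rightarrow> rat" where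
  "rat_weights A I = (SOME q. \<forall>i\<in>I. (\<Sum>j\<in>I. of_nat (A i j) * q j) = 1)"

definition sigma :: "nat \<Rightarrow> complex" where
  "sigma = (\<lambda>j. if j = 0 then -1 else 1)"

definition rhobar :: "(nat \<Rightarrow> nat \<Rightarrow> nat) \<Rightarrow> nat set \<Rightarrow> nat \<Rightarrow> nat \<Rightarrow> complex" where
  "rhobar A I k = (\<lambda>j. if j \<in> I then cis (2 * pi * of_rat (inv_exp A I k j)) else 1)"

definition monomial :: "nat set \<Rightarrow> (nat \<Rightarrow> nat) \<Rightarrow> (nat \<Rightarrow> complex) \<Rightarrow> complex" where
  "monomial I r x = (\<Prod>k\<in>I. x k ^ r k)"

text \<open>Dual of L \<subseteq> Aut(P) inside Aut(P^T).\<close>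
definition BH_dual :: "(nat \<Rightarrow> nat \<Rightarrow> nat) \<Rightarrow> nat set \<Rightarrow> (nat \<Rightarrow> complex) set \<Rightarrow> (nat \<Rightarrow> complex) set" where
  "BH_dual A I L = {(\<lambda>j. \<Prod>k\<in>I. rhobar A I k j ^ r k) | r.
      \<forall>g\<in>L. \<forall>x. monomial I r (diag_act g x) = monomial I r x}"

end

theory Submission
  imports Defs
begin


definition chi :: "nat set \<Rightarrow> (nat \<Rightarrow> nat) \<Rightarrow> (nat \<Rightarrow> complex) \<Rightarrow> complex" where
  "chi I r g = (\<Prod>k\<in>I. g k ^ r k)"

definition rho :: "(nat \<Rightarrow> nat \<Rightarrow> nat) \<Rightarrow> nat set \<Rightarrow> (nat \<Rightarrow> nat) \<Rightarrow> nat \<Rightarrow> complex" where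
  "rho A I r = (\<lambda>j. \<Prod>k\<in>I. rhobar A I k j ^ r k)"

lemma monomial_act: "monomial I r (diag_act g x) = chi I r g * monomial I r x"
  unfolding monomial_def diag_act_def chi_def
  by (simp add: power_mult_distrib prod.distrib)

lemma monomial_one: "monomial I r one_vec = 1"
  unfolding monomial_def one_vec_def by simp

lemma BH_dual_eq: "BH_dual A I L = {rho A I r | r. \<forall>g\<in>L. chi I r g = 1}"
proof -
  have "(\<forall>x. monomial I r (diag_act g x) = monomial I r x) \<longleftrightarrow> chi I r g = 1" for r g
  proof
    assume "\<forall>x. monomial I r (diag_act g x) = monomial I r x"
    then have "monomial I r (diag_act g one_vec) = monomial I r one_vec" by blast
    then show "chi I r g = 1" by (simp add: monomial_act monomial_one)
  qed (simp add: monomial_act)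
  then show ?thesis unfolding BH_dual_def rho_def by simp
qed

lemma gen_sub: "is_subgroup H \<Longrightarrow> S \<subseteq> H \<Longrightarrow> gen S \<subseteq> H"
  unfolding gen_def by blast

lemma gen_incl: "S \<subseteq> gen S"
  unfolding gen_def by blast

lemma gen_subgroup: "is_subgroup (gen S)"
  unfolding gen_def is_subgroup_def by blast

lemma gen_mono: "S \<subseteq> T \<Longrightarrow> gen S \<subseteq> gen T"
  unfolding gen_def by blast

lemma gen_sub_gen: "S \<subseteq> gen T \<Longrightarrow> gen S \<subseteq> gen T"
  by (rule gen_sub[OF gen_subgroup])

lemma gen_of_subgroup: "is_subgroup G \<Longrightarrow> gen G = G"
  using gen_sub[of G G] gen_incl[of G] by blast

lemma gen_mul: "a \<in> gen S \<Longrightarrow> b \<in> gen S \<Longrightarrow> dmul a b \<in> gen S"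
  using gen_subgroup[of S] unfolding is_subgroup_def by blast

lemma gen_inv: "a \<in> gen S \<Longrightarrow> dinv a \<in> gen S"
  using gen_subgroup[of S] unfolding is_subgroup_def by blast

lemma chi_dmul: "chi I r (dmul a b) = chi I r a * chi I r b"
  unfolding chi_def dmul_def by (simp add: power_mult_distrib prod.distrib)

lemma chi_dinv: "chi I r (dinv a) = inverse (chi I r a)"
  unfolding chi_def dinv_def by (simp add: power_inverse prod_inversef[symmetric] o_def)

lemma chi_one: "chi I r one_vec = 1"
  unfolding chi_def one_vec_def by simp

lemma chi_kernel_subgroup: "is_subgroup {g. chi I r g = 1}"
  unfolding is_subgroup_def by (simp add: chi_dmul chi_dinv chi_one)

lemma dual_gen: "(\<forall>g\<in>gen S. chi I r g = 1) \<longleftrightarrow> (\<forall>g\<in>S. chi I r g = 1)"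
proof
  assume "\<forall>g\<in>S. chi I r g = 1"
  then have "gen S \<subseteq> {g. chi I r g = 1}" by (intro gen_sub chi_kernel_subgroup) auto
  then show "\<forall>g\<in>gen S. chi I r g = 1" by blast
qed (use gen_incl in blast)

lemma BH_dual_gen: "BH_dual A I (gen S) = {rho A I r | r. \<forall>g\<in>S. chi I r g = 1}"
  by (simp add: BH_dual_eq dual_gen)

lemma chi_add: "chi I (\<lambda>k. r k + s k) g = chi I r g * chi I s g"
  unfolding chi_def by (simp add: power_add prod.distrib)

lemma chi_smult: "chi I (\<lambda>k. c * r k) g = chi I r g ^ c"
proof -
  have "(\<Prod>k\<in>I. g k ^ r k) ^ c = (\<Prod>k\<in>I. (g k ^ r k) ^ c)" by (rule prod_power_distrib)
  also have "\<dots> = (\<Prod>k\<in>I. g k ^ (c * r k))" by (simp add: power_mult[symmetric] mult.commute)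
  finally show ?thesis by (simp add: chi_def)
qed

lemma rho_chi: "rho A I r j = chi I r (\<lambda>k. rhobar A I k j)"
  unfolding rho_def chi_def by simp

lemma rho_add: "rho A I (\<lambda>k. r k + s k) = dmul (rho A I r) (rho A I s)"
  unfolding dmul_def by (rule ext) (simp only: rho_chi chi_add)

lemma rho_smult: "rho A I (\<lambda>k. c * r k) = (\<lambda>j. rho A I r j ^ c)"
  by (rule ext) (simp only: rho_chi chi_smult)

lemma rho_zero: "rho A I (\<lambda>k. 0) = one_vec"
  unfolding rho_def one_vec_def by simp

lemma rhobar_nz: "rhobar A I k j \<noteq> 0"
  unfolding rhobar_def by simp

lemma rho_nz: "finite I \<Longrightarrow> rho A I r j \<noteq> 0"
  unfolding rho_def by (simp add: rhobar_nz)

lemma rhobar_root: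
  assumes "finite I"
  shows "\<exists>D>0. \<forall>k\<in>I. \<forall>j. rhobar A I k j ^ D = 1"
proof -
  define B where "B = inv_exp A I"
  define D where "D = (\<Prod>p\<in>I\<times>I. nat (snd (quotient_of (B (fst p) (snd p)))))"
  have pos: "\<And>p. nat (snd (quotient_of (B (fst p) (snd p)))) > 0"
    using quotient_of_denom_pos' by simp
  have Dpos: "D > 0" unfolding D_def using pos assms by (simp add: prod_pos)
  have "rhobar A I k j ^ D = 1" if k: "k \<in> I" for k j
  proof (cases "j \<in> I")
    case False then show ?thesis by (simp add: rhobar_def)
  next
    case True
    obtain a c where ac: "quotient_of (B k j) = (a, c)" by (cases "quotient_of (B k j)")
    have cpos: "c > 0" using quotient_of_denom_pos[OF ac] .
    have Bk: "B k j = of_int a / of_int c" using quotient_of_div[OF ac] .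
    have "nat c dvd D" unfolding D_def
      using dvd_prodI[of "I\<times>I" "(k,j)" "\<lambda>p. nat (snd (quotient_of (B (fst p) (snd p))))"] assms k True ac
      by simp
    then obtain e where e: "D = nat c * e" by blast
    have "real D * of_rat (B k j) = of_int (a * int e)"
      using cpos by (simp add: e Bk of_rat_divide field_simps)
    then have h: "real D * (2 * pi * of_rat (B k j)) = 2 * pi * of_int (a * int e)"
      by (metis mult.left_commute)
    have "cis (real D * (2 * pi * of_rat (B k j))) = cis (2 * pi * of_int (a * int e))"
      by (simp only: h)
    also have "\<dots> = 1" by (rule cis_multiple_2pi) simp
    finally show ?thesis using True
      by (simp add: rhobar_def DeMoivre B_def)
  qed
  then show ?thesis using Dpos by blast
qed

lemma dual_subgroup:
  assumes fin: "finite I"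
    and Q0: "Q (\<lambda>k. 0)" and Qadd: "\<And>r s. Q r \<Longrightarrow> Q s \<Longrightarrow> Q (\<lambda>k. r k + s k)"
    and Qsm: "\<And>r c. Q r \<Longrightarrow> Q (\<lambda>k. c * r k)"
  shows "is_subgroup {rho A I r | r. Q r}"
proof -
  obtain D where D: "D > 0" "\<forall>k\<in>I. \<forall>j. rhobar A I k j ^ D = 1"
    using rhobar_root[OF fin] by blast
  have rD: "rho A I r j ^ D = 1" for r j
  proof -
    have "rho A I r j ^ D = (\<Prod>k\<in>I. (rhobar A I k j ^ r k) ^ D)"
      unfolding rho_def by (rule prod_power_distrib)
    also have "\<dots> = (\<Prod>k\<in>I. (rhobar A I k j ^ D) ^ r k)"
      by (intro prod.cong refl) (simp only: power_mult[symmetric] mult.commute)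
    also have "\<dots> = 1" using D(2) by simp
    finally show ?thesis .
  qed
  have inv: "dinv (rho A I r) = rho A I (\<lambda>k. (D - 1) * r k)" for r
  proof
    fix j
    have DS: "D = Suc (D - 1)" using D(1) by simp
    have "rho A I r j * rho A I r j ^ (D - 1) = 1"
      using rD[of r j] DS by (metis power_Suc)
    then have "inverse (rho A I r j) = rho A I r j ^ (D - 1)"
      by (rule inverse_unique)
    then show "dinv (rho A I r) j = rho A I (\<lambda>k. (D - 1) * r k) j"
      unfolding dinv_def rho_smult by simp
  qed
  show ?thesis unfolding is_subgroup_def
  proof (intro conjI ballI)
    show "one_vec \<in> {rho A I r |r. Q r}" using Q0 rho_zero[symmetric] by blast
  next
    fix a b assume "a \<in> {rho A I r |r. Q r}" "b \<in> {rho A I r |r. Q r}"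
    then obtain r s where "a = rho A I r" "Q r" "b = rho A I s" "Q s" by blast
    then have "dmul a b = rho A I (\<lambda>k. r k + s k)" "Q (\<lambda>k. r k + s k)"
      using rho_add Qadd by simp_all
    then show "dmul a b \<in> {rho A I r |r. Q r}" by blast
  next
    fix a assume "a \<in> {rho A I r |r. Q r}"
    then obtain r where "a = rho A I r" "Q r" by blast
    then have "dinv a = rho A I (\<lambda>k. (D - 1) * r k)" "Q (\<lambda>k. (D - 1) * r k)"
      using inv Qsm by simp_all
    then show "dinv a \<in> {rho A I r |r. Q r}" by blast
  qed
qed

lemma chi_zero: "chi I (\<lambda>k. 0) g = 1"
  unfolding chi_def by simp

lemma dual_kernel_subgroup: "finite I \<Longrightarrow> is_subgroup {rho A I r | r. \<forall>g\<in>S. chi I r g = 1}"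
  by (rule dual_subgroup) (simp_all add: chi_zero chi_add chi_smult)




lemma inv_unique:
  fixes A :: "nat \<Rightarrow> nat \<Rightarrow> nat" and C B :: "nat \<Rightarrow> nat \<Rightarrow> rat"
  assumes fin: "finite I"
    and left: "\<forall>i\<in>I. \<forall>j\<in>I. (\<Sum>k\<in>I. C i k * of_nat (A k j)) = (if i = j then 1 else 0)"
    and right: "\<forall>i\<in>I. \<forall>j\<in>I. (\<Sum>k\<in>I. of_nat (A i k) * B k j) = (if i = j then 1 else 0)"
    and ij: "i \<in> I" "j \<in> I"
  shows "C i j = B i j"
proof -
  have "(\<Sum>l\<in>I. C i l * (if l = j then 1 else 0)) = (\<Sum>l\<in>I. if l = j then C i l else 0)"
    by (intro sum.cong) auto
  then have "C i j = (\<Sum>l\<in>I. C i l * (if l = j then 1 else 0))"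
    using fin ij by simp
  also have "\<dots> = (\<Sum>l\<in>I. C i l * (\<Sum>k\<in>I. of_nat (A l k) * B k j))"
    using right ij by (intro sum.cong refl) simp
  also have "\<dots> = (\<Sum>l\<in>I. \<Sum>k\<in>I. C i l * of_nat (A l k) * B k j)"
    by (simp add: sum_distrib_left mult.assoc)
  also have "\<dots> = (\<Sum>k\<in>I. \<Sum>l\<in>I. C i l * of_nat (A l k) * B k j)"
    by (rule sum.swap)
  also have "\<dots> = (\<Sum>k\<in>I. (\<Sum>l\<in>I. C i l * of_nat (A l k)) * B k j)"
    by (simp add: sum_distrib_right)
  also have "\<dots> = (\<Sum>k\<in>I. (if i = k then 1 else 0) * B k j)"
    using left ij by (intro sum.cong refl) simp
  also have "\<dots> = (\<Sum>k\<in>I. if k = i then B k j else 0)"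
    by (intro sum.cong) auto
  also have "\<dots> = B i j"
    using fin ij by simp
  finally show ?thesis .
qed

lemma set_0n: "{0..n} = insert (0::nat) {1..n}" by auto

lemma sum_0n: "(\<Sum>k\<in>{0..(n::nat)}. f k) = f 0 + (\<Sum>k\<in>{1..n}. f k)"
  unfolding set_0n by (subst sum.insert) auto

lemma prod_0n: "(\<Prod>k\<in>{0..(n::nat)}. f k) = f 0 * (\<Prod>k\<in>{1..n}. f k)"
  unfolding set_0n by (subst prod.insert) auto

definition BV0 :: "(nat \<Rightarrow> nat \<Rightarrow> rat) \<Rightarrow> nat \<Rightarrow> nat \<Rightarrow> rat" where
  "BV0 B = (\<lambda>i j. if i = 0 \<and> j = 0 then 1/2 else if i = 0 \<or> j = 0 then 0 else B i j)"

lemma BV0_inverse: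
  assumes "is_inverse_exp M {1..n} B"
  shows "is_inverse_exp (Vmat M) {0..n} (BV0 B)"
  unfolding is_inverse_exp_def
proof (intro ballI conjI)
  fix i j assume i: "i \<in> {0..n}" and j: "j \<in> {0..n}"
  have s1: "(\<Sum>k\<in>{1..n}. of_nat (Vmat M i k) * BV0 B k j) =
        (if i = 0 \<or> j = 0 then 0 else (\<Sum>k\<in>{1..n}. of_nat (M i k) * B k j))"
    by (auto simp: Vmat_def BV0_def intro!: sum.neutral sum.cong)
  show "(\<Sum>k\<in>{0..n}. of_nat (Vmat M i k) * BV0 B k j) = (if i = j then 1 else 0)"
    unfolding sum_0n s1 using assms i j
    by (auto simp: Vmat_def BV0_def is_inverse_exp_def)
  have s2: "(\<Sum>k\<in>{1..n}. BV0 B i k * of_nat (Vmat M k j)) =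
        (if i = 0 \<or> j = 0 then 0 else (\<Sum>k\<in>{1..n}. B i k * of_nat (M k j)))"
    by (auto simp: Vmat_def BV0_def intro!: sum.neutral sum.cong)
  show "(\<Sum>k\<in>{0..n}. BV0 B i k * of_nat (Vmat M k j)) = (if i = j then 1 else 0)"
    unfolding sum_0n s2 using assms i j
    by (auto simp: Vmat_def BV0_def is_inverse_exp_def)
qed

lemma inv_exp_is: "invertible_exp A I \<Longrightarrow> is_inverse_exp A I (inv_exp A I)"
  unfolding invertible_exp_def inv_exp_def by (rule someI_ex[of "is_inverse_exp A I"])

lemma BV_eq:
  assumes inv: "invertible_exp M {1..n}" and i: "i \<in> {0..n}" and j: "j \<in> {0..n}"
  shows "inv_exp (Vmat M) {0..n} i j = BV0 (inv_exp M {1..n}) i j"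
proof -
  have B0: "is_inverse_exp (Vmat M) {0..n} (BV0 (inv_exp M {1..n}))"
    by (rule BV0_inverse[OF inv_exp_is[OF inv]])
  then have "invertible_exp (Vmat M) {0..n}" unfolding invertible_exp_def by blast
  from inv_exp_is[OF this] have BV: "is_inverse_exp (Vmat M) {0..n} (inv_exp (Vmat M) {0..n})" .
  show ?thesis
    by (rule inv_unique[of "{0..n}" _ "Vmat M"]) (use BV B0 i j in \<open>auto simp: is_inverse_exp_def\<close>)
qed

lemma rhobarV0: 
  assumes inv: "invertible_exp M {1..n}"
  shows "rhobar (Vmat M) {0..n} 0 = sigma"
proof
  fix j
  show "rhobar (Vmat M) {0..n} 0 j = sigma j"
  proof (cases "j \<in> {0..n}")
    case True
    then show ?thesis using BV_eq[OF inv, of 0 j]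
      by (auto simp: rhobar_def sigma_def BV0_def of_rat_divide)
  qed (auto simp: rhobar_def sigma_def)
qed

lemma rhobarVk: 
  assumes inv: "invertible_exp M {1..n}" and k: "k \<in> {1..n}"
  shows "rhobar (Vmat M) {0..n} k = rhobar M {1..n} k"
proof
  fix j
  show "rhobar (Vmat M) {0..n} k j = rhobar M {1..n} k j"
  proof (cases "j \<in> {0..n}")
    case True
    then show ?thesis using BV_eq[OF inv, of k j] k
      by (auto simp: rhobar_def BV0_def)
  qed (auto simp: rhobar_def)
qed

lemma rhoV:
  assumes inv: "invertible_exp M {1..n}"
  shows "rho (Vmat M) {0..n} r = (\<lambda>j. sigma j ^ r 0 * rho M {1..n} r j)"
proof
  fix j
  have "rho (Vmat M) {0..n} r j = rhobar (Vmat M) {0..n} 0 j ^ r 0 *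
          (\<Prod>k\<in>{1..n}. rhobar (Vmat M) {0..n} k j ^ r k)"
    unfolding rho_def by (rule prod_0n)
  also have "\<dots> = sigma j ^ r 0 * (\<Prod>k\<in>{1..n}. rhobar M {1..n} k j ^ r k)"
    using rhobarV0[OF inv] rhobarVk[OF inv] by simp
  finally show "rho (Vmat M) {0..n} r j = sigma j ^ r 0 * rho M {1..n} r j"
    unfolding rho_def .
qed

lemma chiV: "chi {0..n} r g = g 0 ^ r 0 * chi {1..n} r g"
  unfolding chi_def by (rule prod_0n)

lemma prod_cis: "finite I \<Longrightarrow> (\<Prod>k\<in>I. cis (f k)) = cis (\<Sum>k\<in>I. f k)"
  by (induction I rule: finite_induct) (simp_all add: cis_mult)

lemma rat_weights_eq:
  assumes inv: "invertible_exp M {1..n}" and j: "j \<in> {1..n}"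
  shows "rat_weights (trans_exp M) {1..n} j = (\<Sum>k\<in>{1..n}. inv_exp M {1..n} k j)"
proof -
  define B where "B = inv_exp M {1..n}"
  have Bi: "is_inverse_exp M {1..n} B" unfolding B_def by (rule inv_exp_is[OF inv])
  define P where "P = (\<lambda>q. \<forall>i\<in>{1..n}. (\<Sum>j\<in>{1..n}. of_nat (trans_exp M i j) * q j) = (1::rat))"
  have "P (\<lambda>j. \<Sum>k\<in>{1..n}. B k j)"
    unfolding P_def
  proof
    fix i assume i: "i \<in> {1..n}"
    have "(\<Sum>j\<in>{1..n}. of_nat (trans_exp M i j) * (\<Sum>k\<in>{1..n}. B k j))
        = (\<Sum>j\<in>{1..n}. \<Sum>k\<in>{1..n}. B k j * of_nat (M j i))"
      by (simp add: trans_exp_def sum_distrib_left mult.commute)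
    also have "\<dots> = (\<Sum>k\<in>{1..n}. \<Sum>j\<in>{1..n}. B k j * of_nat (M j i))"
      by (rule sum.swap)
    also have "\<dots> = (\<Sum>k\<in>{1..n}. (if k = i then 1 else 0))"
      using Bi i by (intro sum.cong refl) (simp add: is_inverse_exp_def)
    also have "\<dots> = 1" using i by simp
    finally show "(\<Sum>j\<in>{1..n}. of_nat (trans_exp M i j) * (\<Sum>k\<in>{1..n}. B k j)) = 1" .
  qed
  moreover have "rat_weights (trans_exp M) {1..n} = (SOME q. P q)"
    unfolding rat_weights_def P_def by simp
  ultimately have Pq: "P (rat_weights (trans_exp M) {1..n})"
    using someI[of P] by simp
  define q where "q = rat_weights (trans_exp M) {1..n}"
  have "(\<Sum>l\<in>{1..n}. (if l = j then 1 else 0) * q l) = (\<Sum>l\<in>{1..n}. if l = j then q l else 0)"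
    by (intro sum.cong) auto
  then have "q j = (\<Sum>l\<in>{1..n}. (if l = j then 1 else 0) * q l)"
    using j by simp
  also have "\<dots> = (\<Sum>l\<in>{1..n}. (\<Sum>i\<in>{1..n}. of_nat (M l i) * B i j) * q l)"
    using Bi j by (intro sum.cong refl) (simp add: is_inverse_exp_def)
  also have "\<dots> = (\<Sum>l\<in>{1..n}. \<Sum>i\<in>{1..n}. B i j * (of_nat (M l i) * q l))"
    unfolding sum_distrib_right by (intro sum.cong refl) (simp add: mult_ac)
  also have "\<dots> = (\<Sum>i\<in>{1..n}. \<Sum>l\<in>{1..n}. B i j * (of_nat (M l i) * q l))"
    by (rule sum.swap)
  also have "\<dots> = (\<Sum>i\<in>{1..n}. B i j * (\<Sum>l\<in>{1..n}. of_nat (trans_exp M i l) * q l))"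
    by (simp add: sum_distrib_left trans_exp_def)
  also have "\<dots> = (\<Sum>i\<in>{1..n}. B i j)"
    using Pq unfolding P_def q_def by simp
  finally show ?thesis unfolding q_def B_def .
qed

lemma JWs_rho:
  assumes inv: "invertible_exp M {1..n}"
  shows "Jvec (\<lambda>j. of_rat (rat_weights (trans_exp M) {1..n} j)) {1..n} = rho M {1..n} (\<lambda>_. 1)"
proof
  fix j
  show "Jvec (\<lambda>j. of_rat (rat_weights (trans_exp M) {1..n} j)) {1..n} j = rho M {1..n} (\<lambda>_. 1) j"
  proof (cases "j \<in> {1..n}")
    case True
    have "rho M {1..n} (\<lambda>_. 1) j = (\<Prod>k\<in>{1..n}. cis (2 * pi * of_rat (inv_exp M {1..n} k j)))"
      unfolding rho_def rhobar_def using True by simp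
    also have "\<dots> = cis (\<Sum>k\<in>{1..n}. 2 * pi * of_rat (inv_exp M {1..n} k j))"
      by (rule prod_cis) simp
    also have "\<dots> = cis (2 * pi * of_rat (\<Sum>k\<in>{1..n}. inv_exp M {1..n} k j))"
      by (simp add: sum_distrib_left of_rat_sum)
    finally show ?thesis using True rat_weights_eq[OF inv True] by (simp add: Jvec_def)
  next
    case False
    then have "\<forall>k. rhobar M {1..n} k j = 1" unfolding rhobar_def by auto
    then show ?thesis using False unfolding rho_def Jvec_def by auto
  qed
qed

lemma chi_JW:
  assumes dpos: "d > 0" and cy: "2 * (\<Sum>j\<in>{1..n}. w j) = d"
  shows "chi {1..n} (\<lambda>_. 1) (Jvec (\<lambda>j. real (w j) / real d) {1..n}) = -1"
proof -
  have "chi {1..n} (\<lambda>_. 1) (Jvec (\<lambda>j. real (w j) / real d) {1..n})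
      = (\<Prod>j\<in>{1..n}. cis (2 * pi * (real (w j) / real d)))"
    unfolding chi_def Jvec_def by simp
  also have "\<dots> = cis (\<Sum>j\<in>{1..n}. 2 * pi * (real (w j) / real d))"
    by (rule prod_cis) simp
  also have "(\<Sum>j\<in>{1..n}. 2 * pi * (real (w j) / real d)) = 2 * pi * real (\<Sum>j\<in>{1..n}. w j) / real d"
    by (simp add: sum_distrib_left sum_divide_distrib)
  also have "\<dots> = pi"
  proof -
    have "real d = 2 * real (\<Sum>j\<in>{1..n}. w j)" using cy by (metis of_nat_mult of_nat_numeral)
    then show ?thesis using dpos by simp
  qed
  finally show ?thesis by simp
qed




lemma sigma_pow_even: "even m \<Longrightarrow> sigma j ^ m = 1"
  by (simp add: sigma_def)

lemma sigma_pow_odd: "odd m \<Longrightarrow> sigma j ^ m = sigma j"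
  by (simp add: sigma_def)

lemma chi_upd0: "chi {1..n} (r(0 := c)) = chi {1..n} r"
  unfolding chi_def by (intro ext prod.cong refl) auto

lemma rho_upd0: "rho A {1..n} (r(0 := c)) = rho A {1..n} r"
  unfolding rho_def by (intro ext prod.cong refl) auto

lemma chi_sigma: "chi {1..n} r sigma = 1"
  unfolding chi_def sigma_def by simp

lemma chi_SigE: "chi {1..n} (\<lambda>k. if k = 0 then 1 else 0) t = 1"
  unfolding chi_def by (intro prod.neutral) auto

lemma rho_SigE: "rho A {1..n} (\<lambda>k. if k = 0 then 1 else 0) = one_vec"
  unfolding rho_def one_vec_def by (intro ext prod.neutral) auto

lemma dmul_dinv_cancel: "(\<And>j. b j \<noteq> 0) \<Longrightarrow> dmul (dmul a b) (dinv b) = a"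
  unfolding dmul_def dinv_def by (intro ext) simp

lemma sigma_swap: "dmul sigma (dmul y (dinv b)) = dmul y (dinv (dmul sigma b))"
  unfolding dmul_def dinv_def sigma_def by (intro ext) simp




theorem proposition4p5:
  fixes n d :: nat and M :: "nat \<Rightarrow> nat \<Rightarrow> nat" and w :: "nat \<Rightarrow> nat"
    and G :: "(nat \<Rightarrow> complex) set"
  assumes inv: "invertible_exp M {1..n}"
    and wpos: "\<forall>j\<in>{1..n}. w j > 0" and dpos: "d > 0"
    and qh: "quasi_hom M {1..n} w d"
    and nondeg: "nondegenerate M {1..n}"
    and cy: "2 * (\<Sum>j\<in>{1..n}. w j) = d"
    and Gsub: "is_subgroup G" and GSL: "G \<subseteq> SLgrp M {1..n}"
    and JW_def: "JW = Jvec (\<lambda>j. real (w j) / real d) {1..n}"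
    and JWs_def: "JWs = Jvec (\<lambda>j. of_rat (rat_weights (trans_exp M) {1..n} j)) {1..n}"
    and J2: "dmul JW JW \<in> G"
    and Gs_def: "Gs = BH_dual M {1..n} (gen (G \<union> {JW}))"
    and dV_def: "dV = (\<lambda>L. BH_dual (Vmat M) {0..n} L)"
  shows "dV G = gen (Gs \<union> {sigma, JWs})
       \<and> dV (gen (G \<union> {sigma})) = gen (Gs \<union> {JWs})
       \<and> dV (gen (G \<union> {dmul sigma JW})) = gen (Gs \<union> {dmul sigma JWs})
       \<and> dV (gen (G \<union> {JW})) = gen (Gs \<union> {sigma})
       \<and> dV (gen (G \<union> {sigma, JW})) = Gs
       \<and> G \<subseteq> gen (G \<union> {sigma}) \<and> G \<subseteq> gen (G \<union> {dmul sigma JW}) \<and> G \<subseteq> gen (G \<union> {JW})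
       \<and> gen (G \<union> {sigma}) \<subseteq> gen (G \<union> {sigma, JW})
       \<and> gen (G \<union> {dmul sigma JW}) \<subseteq> gen (G \<union> {sigma, JW})
       \<and> gen (G \<union> {JW}) \<subseteq> gen (G \<union> {sigma, JW})
       \<and> Gs \<subseteq> gen (Gs \<union> {JWs}) \<and> Gs \<subseteq> gen (Gs \<union> {dmul sigma JWs}) \<and> Gs \<subseteq> gen (Gs \<union> {sigma})
       \<and> gen (Gs \<union> {JWs}) \<subseteq> gen (Gs \<union> {sigma, JWs})
       \<and> gen (Gs \<union> {dmul sigma JWs}) \<subseteq> gen (Gs \<union> {sigma, JWs})
       \<and> gen (Gs \<union> {sigma}) \<subseteq> gen (Gs \<union> {sigma, JWs})"
proof -
  define I where "I = {1..n}"
  define P where "P r \<longleftrightarrow> (\<forall>g\<in>G. chi I r g = 1)" for r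
  define E where "E r = (\<lambda>j. sigma j ^ r 0 * rho M I r j)" for r
  define DV where "DV S = {E r | r. \<forall>t\<in>S. t 0 ^ r 0 * chi I r t = 1}" for S
  define SigE :: "nat \<Rightarrow> nat" where "SigE = (\<lambda>k. if k = 0 then 1 else 0)"
  define one :: "nat \<Rightarrow> nat" where "one = (\<lambda>_. 1)"
  have dVgen: "dV (gen S) = DV S" for S
    unfolding dV_def DV_def E_def BH_dual_gen rhoV[OF inv] chiV I_def by simp
  have DVsub: "is_subgroup (DV S)" for S
    using dual_kernel_subgroup[of "{0..n}" "Vmat M" S]
    unfolding DV_def E_def rhoV[OF inv] chiV I_def by simp
  have Gs_eq: "Gs = {rho M I r | r. P r \<and> chi I r JW = 1}"
    unfolding Gs_def BH_dual_gen P_def I_def by auto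
  have g0: "g 0 = 1" if "g \<in> G" for g
    using that GSL unfolding SLgrp_def Aut_def by auto
  have gdet: "chi I one g = 1" if "g \<in> G" for g
    using that GSL unfolding SLgrp_def chi_def one_def I_def by auto
  have dVG: "dV G = DV G" using dVgen[of G] gen_of_subgroup[OF Gsub] by simp
  have sig0: "sigma 0 = -1" by (simp add: sigma_def)
  have sigI: "chi I r sigma = 1" for r unfolding I_def by (rule chi_sigma)
  have JW0: "JW 0 = 1" by (simp add: JW_def Jvec_def)
  have sJ0: "dmul sigma JW 0 = -1" by (simp add: dmul_def sig0 JW0)
  have chi_sJ: "chi I r (dmul sigma JW) = chi I r JW" for r
    by (simp add: chi_dmul sigI)
  have J1: "chi I one JW = -1"
    unfolding JW_def one_def I_def by (rule chi_JW[OF dpos cy])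
  have JWs_eq: "JWs = rho M I one"
    unfolding JWs_def I_def one_def by (rule JWs_rho[OF inv])
  have JWs_nz: "JWs j \<noteq> 0" for j
    unfolding JWs_eq I_def by (rule rho_nz) simp
  have Jpm: "chi I r JW = 1 \<or> chi I r JW = -1" if "P r" for r
  proof -
    have "chi I r (dmul JW JW) = 1" using that J2 unfolding P_def by blast
    then have "chi I r JW * chi I r JW = 1" by (simp add: chi_dmul)
    then show ?thesis by (simp add: square_eq_1_iff)
  qed
  have E_even: "E r = rho M I r" if "even (r 0)" for r
    unfolding E_def using that by (simp add: sigma_pow_even)
  have E_odd: "E r = dmul sigma (rho M I r)" if "odd (r 0)" for r
    unfolding E_def dmul_def using that by (simp add: sigma_pow_odd)
  have E0: "E (r(0 := 0)) = rho M I r" for r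
  proof -
    have "rho M I (r(0:=0)) = rho M I r" unfolding I_def by (rule rho_upd0)
    then show ?thesis unfolding E_def by simp
  qed
  have chi0: "chi I (r(0 := 0)) = chi I r" for r
    unfolding I_def by (rule chi_upd0)
  have ESig: "E SigE = sigma"
    unfolding E_def SigE_def I_def rho_SigE by (simp add: one_vec_def)
  have chiSig: "chi I SigE t = 1" for t
    unfolding SigE_def I_def by (rule chi_SigE)
  have SigE0: "SigE 0 = 1" by (simp add: SigE_def)
  have E1: "E one = dmul sigma JWs"
    unfolding E_def JWs_eq dmul_def one_def by simp
  have one0: "one(0 := 0) = (\<lambda>k. if k = 0 then 0 else 1)" by (auto simp: one_def)
  have Eone0: "E (one(0 := 0)) = JWs" using E0[of one] JWs_eq by simp
  have rho_plus1: "rho M I (\<lambda>k. r k + one k) = dmul (rho M I r) JWs" for r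
    unfolding JWs_eq by (rule rho_add)
  have Wsplit: "(chi I r JW = 1 \<and> rho M I r \<in> Gs) \<or>
     (chi I r JW = -1 \<and> (\<exists>y\<in>Gs. rho M I r = dmul y (dinv JWs)))" if Pr: "P r" for r
  proof (cases "chi I r JW = 1")
    case True
    then show ?thesis using Pr unfolding Gs_eq by blast
  next
    case False
    then have m1: "chi I r JW = -1" using Jpm[OF Pr] by blast
    define s where "s = (\<lambda>k. r k + one k)"
    have Ps: "P s" using Pr gdet unfolding P_def s_def by (simp add: chi_add)
    have Js: "chi I s JW = 1" unfolding s_def by (simp add: chi_add m1 J1)
    have "rho M I s \<in> Gs" unfolding Gs_eq using Ps Js by blast
    moreover have "rho M I r = dmul (rho M I s) (dinv JWs)"
      unfolding s_def rho_plus1 using dmul_dinv_cancel[of JWs] JWs_nz by simp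
    ultimately show ?thesis using m1 by blast
  qed
  have Epar: "E r \<in> gen T" if rT: "rho M I r \<in> gen T" and sT: "sigma \<in> gen T" for r T
  proof (cases "even (r 0)")
    case True then show ?thesis using rT E_even[of r, OF True] by simp
  next
    case False
    have "dmul sigma (rho M I r) \<in> gen T" by (rule gen_mul[OF sT rT])
    then show ?thesis using E_odd[of r, OF False] by simp
  qed
  have Gs_in: "rho M I r \<in> gen T" if Pr: "P r" and GT: "Gs \<subseteq> gen T" and JT: "JWs \<in> gen T" for r T
  proof -
    from Wsplit[OF Pr] show ?thesis
    proof (elim disjE conjE)
      assume "rho M I r \<in> Gs" then show ?thesis using GT by (rule subsetD[rotated])
    next
      assume "\<exists>y\<in>Gs. rho M I r = dmul y (dinv JWs)"
      then obtain y where y: "y \<in> Gs" "rho M I r = dmul y (dinv JWs)" by blast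
      have "y \<in> gen T" using GT y(1) by (rule subsetD)
      then have "dmul y (dinv JWs) \<in> gen T" by (rule gen_mul[OF _ gen_inv[OF JT]])
      then show ?thesis using y(2) by simp
    qed
  qed
  have inDV: "E r \<in> DV S" if "\<forall>t\<in>S. t 0 ^ r 0 * chi I r t = 1" for r S
    unfolding DV_def using that by blast
  have Gs_DV: "Gs \<subseteq> DV S" if St: "\<And>t r. t \<in> S \<Longrightarrow> P r \<Longrightarrow> chi I r JW = 1 \<Longrightarrow> chi I r t = 1" for S
  proof
    fix y assume "y \<in> Gs"
    then obtain r where y: "y = rho M I r" "P r" "chi I r JW = 1" unfolding Gs_eq by blast
    have "\<forall>t\<in>S. t 0 ^ (r(0:=0)) 0 * chi I (r(0:=0)) t = 1"
    proof
      fix t assume "t \<in> S"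
      then have "chi I r t = 1" using St y(2,3) by blast
      then show "t 0 ^ (r(0:=0)) 0 * chi I (r(0:=0)) t = 1" by (simp add: chi0)
    qed
    then have "E (r(0:=0)) \<in> DV S" by (rule inDV)
    then show "y \<in> DV S" using E0 y(1) by simp
  qed
  have DV_elim: "\<exists>r. x = E r \<and> (\<forall>t\<in>S. t 0 ^ r 0 * chi I r t = 1)" if "x \<in> DV S" for x S
    using that unfolding DV_def by blast
  have PG: "P r" if H: "\<forall>t\<in>G \<union> T. t 0 ^ r 0 * chi I r t = 1" for r T
    unfolding P_def
  proof
    fix g assume gG: "g \<in> G"
    then have "g 0 ^ r 0 * chi I r g = 1" using H by blast
    then show "chi I r g = 1" using g0[OF gG] by simp
  qed
  have incl3: "A \<subseteq> gen (A \<union> {a, b})" "a \<in> gen (A \<union> {a, b})" "b \<in> gen (A \<union> {a, b})" for A a b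
    using gen_incl[of "A \<union> {a, b}"] by auto
  have incl2: "A \<subseteq> gen (A \<union> {a})" "a \<in> gen (A \<union> {a})" for A a
    using gen_incl[of "A \<union> {a}"] by auto
  have sigDV: "sigma \<in> DV S" if "\<And>t. t \<in> S \<Longrightarrow> t 0 = 1" for S
  proof -
    have "\<forall>t\<in>S. t 0 ^ SigE 0 * chi I SigE t = 1" using that by (simp add: SigE0 chiSig)
    then show ?thesis using inDV[of S SigE] ESig by simp
  qed
  have JWsDV: "JWs \<in> DV S" if "\<And>t. t \<in> S \<Longrightarrow> chi I one t = 1" for S
  proof -
    have "\<forall>t\<in>S. t 0 ^ (one(0:=0)) 0 * chi I (one(0:=0)) t = 1" using that by (simp add: chi0)
    then show ?thesis using inDV[of S "one(0:=0)"] Eone0 by simp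
  qed
  have eq1: "DV G = gen (Gs \<union> {sigma, JWs})"
  proof
    show "DV G \<subseteq> gen (Gs \<union> {sigma, JWs})"
    proof
      fix x assume "x \<in> DV G"
      then obtain r where x: "x = E r" "\<forall>t\<in>G. t 0 ^ r 0 * chi I r t = 1" using DV_elim by blast
      have Pr: "P r" using PG[where T="{}"] x(2) by simp
      have "rho M I r \<in> gen (Gs \<union> {sigma, JWs})" by (rule Gs_in[OF Pr incl3(1) incl3(3)])
      then have "E r \<in> gen (Gs \<union> {sigma, JWs})" by (rule Epar[OF _ incl3(2)])
      then show "x \<in> gen (Gs \<union> {sigma, JWs})" using x(1) by simp
    qed
  next
    show "gen (Gs \<union> {sigma, JWs}) \<subseteq> DV G"
    proof (rule gen_sub[OF DVsub])
      have "Gs \<subseteq> DV G" by (rule Gs_DV) (simp add: P_def)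
      moreover have "sigma \<in> DV G" by (rule sigDV) (rule g0)
      moreover have "JWs \<in> DV G" by (rule JWsDV) (rule gdet)
      ultimately show "Gs \<union> {sigma, JWs} \<subseteq> DV G" by blast
    qed
  qed
  have eq2: "DV (G \<union> {sigma}) = gen (Gs \<union> {JWs})"
  proof
    show "DV (G \<union> {sigma}) \<subseteq> gen (Gs \<union> {JWs})"
    proof
      fix x assume "x \<in> DV (G \<union> {sigma})"
      then obtain r where x: "x = E r" "\<forall>t\<in>G \<union> {sigma}. t 0 ^ r 0 * chi I r t = 1" using DV_elim by blast
      have Pr: "P r" using PG x(2) by blast
      have "sigma 0 ^ r 0 * chi I r sigma = 1" using x(2) by blast
      then have "(-1::complex) ^ r 0 = 1" by (simp add: sig0 sigI)
      then have ev: "even (r 0)" by (simp add: minus_one_power_iff split: if_splits)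
      have "rho M I r \<in> gen (Gs \<union> {JWs})" by (rule Gs_in[OF Pr incl2(1) incl2(2)])
      then show "x \<in> gen (Gs \<union> {JWs})" using E_even[of r, OF ev] x(1) by simp
    qed
  next
    show "gen (Gs \<union> {JWs}) \<subseteq> DV (G \<union> {sigma})"
    proof (rule gen_sub[OF DVsub])
      have "Gs \<subseteq> DV (G \<union> {sigma})" by (rule Gs_DV) (auto simp: P_def sigI)
      moreover have "JWs \<in> DV (G \<union> {sigma})" by (rule JWsDV) (auto simp: sigI gdet)
      ultimately show "Gs \<union> {JWs} \<subseteq> DV (G \<union> {sigma})" by blast
    qed
  qed
  have eq3: "DV (G \<union> {dmul sigma JW}) = gen (Gs \<union> {dmul sigma JWs})"
  proof
    show "DV (G \<union> {dmul sigma JW}) \<subseteq> gen (Gs \<union> {dmul sigma JWs})"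
    proof
      fix x assume "x \<in> DV (G \<union> {dmul sigma JW})"
      then obtain r where x: "x = E r" "\<forall>t\<in>G \<union> {dmul sigma JW}. t 0 ^ r 0 * chi I r t = 1"
        using DV_elim by blast
      have Pr: "P r" using PG x(2) by blast
      have "dmul sigma JW 0 ^ r 0 * chi I r (dmul sigma JW) = 1" using x(2) by blast
      then have c: "(-1::complex) ^ r 0 * chi I r JW = 1" by (simp only: sJ0 chi_sJ)
      show "x \<in> gen (Gs \<union> {dmul sigma JWs})"
      proof (cases "even (r 0)")
        case True
        then have "chi I r JW = 1" using c by simp
        then have "rho M I r \<in> Gs" unfolding Gs_eq using Pr by blast
        then have "rho M I r \<in> gen (Gs \<union> {dmul sigma JWs})" using incl2(1) by (rule subsetD[rotated])
        then show ?thesis using E_even[of r, OF True] x(1) by simp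
      next
        case False
        then have "- chi I r JW = 1" using c by simp
        then have "chi I r JW = -1" by (metis minus_minus)
        then have "chi I r JW \<noteq> 1" by simp
        then obtain y where y: "y \<in> Gs" "rho M I r = dmul y (dinv JWs)" using Wsplit[OF Pr] by blast
        have xe: "x = dmul y (dinv (dmul sigma JWs))"
          using x(1) E_odd[of r, OF False] y(2) sigma_swap by simp
        have "y \<in> gen (Gs \<union> {dmul sigma JWs})" using incl2(1) y(1) by (rule subsetD)
        then have "dmul y (dinv (dmul sigma JWs)) \<in> gen (Gs \<union> {dmul sigma JWs})"
          by (rule gen_mul[OF _ gen_inv[OF incl2(2)]])
        then show ?thesis using xe by simp
      qed
    qed
  next
    show "gen (Gs \<union> {dmul sigma JWs}) \<subseteq> DV (G \<union> {dmul sigma JW})"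
    proof (rule gen_sub[OF DVsub])
      have "Gs \<subseteq> DV (G \<union> {dmul sigma JW})" by (rule Gs_DV) (auto simp: P_def chi_sJ)
      moreover have "dmul sigma JWs \<in> DV (G \<union> {dmul sigma JW})"
      proof -
        have "\<forall>t\<in>G \<union> {dmul sigma JW}. t 0 ^ one 0 * chi I one t = 1"
        proof
          fix t assume "t \<in> G \<union> {dmul sigma JW}"
          then show "t 0 ^ one 0 * chi I one t = 1"
          proof
            assume tG: "t \<in> G" show ?thesis using g0[OF tG] gdet[OF tG] by (simp add: one_def)
          next
            assume "t \<in> {dmul sigma JW}"
            then show ?thesis using sJ0 chi_sJ J1 by (simp add: one_def)
          qed
        qed
        then show ?thesis using inDV[of "G \<union> {dmul sigma JW}" one] E1 by simp
      qed
      ultimately show "Gs \<union> {dmul sigma JWs} \<subseteq> DV (G \<union> {dmul sigma JW})" by blast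
    qed
  qed
  have eq4: "DV (G \<union> {JW}) = gen (Gs \<union> {sigma})"
  proof
    show "DV (G \<union> {JW}) \<subseteq> gen (Gs \<union> {sigma})"
    proof
      fix x assume "x \<in> DV (G \<union> {JW})"
      then obtain r where x: "x = E r" "\<forall>t\<in>G \<union> {JW}. t 0 ^ r 0 * chi I r t = 1" using DV_elim by blast
      have Pr: "P r" using PG x(2) by blast
      have "JW 0 ^ r 0 * chi I r JW = 1" using x(2) by blast
      then have "chi I r JW = 1" by (simp add: JW0)
      then have "rho M I r \<in> Gs" unfolding Gs_eq using Pr by blast
      then have "rho M I r \<in> gen (Gs \<union> {sigma})" using incl2(1) by (rule subsetD[rotated])
      then have "E r \<in> gen (Gs \<union> {sigma})" by (rule Epar[OF _ incl2(2)])
      then show "x \<in> gen (Gs \<union> {sigma})" using x(1) by simp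
    qed
  next
    show "gen (Gs \<union> {sigma}) \<subseteq> DV (G \<union> {JW})"
    proof (rule gen_sub[OF DVsub])
      have "Gs \<subseteq> DV (G \<union> {JW})" by (rule Gs_DV) (auto simp: P_def)
      moreover have "sigma \<in> DV (G \<union> {JW})" by (rule sigDV) (auto simp: JW0 g0)
      ultimately show "Gs \<union> {sigma} \<subseteq> DV (G \<union> {JW})" by blast
    qed
  qed
  have eq5: "DV (G \<union> {sigma, JW}) = Gs"
  proof
    show "DV (G \<union> {sigma, JW}) \<subseteq> Gs"
    proof
      fix x assume "x \<in> DV (G \<union> {sigma, JW})"
      then obtain r where x: "x = E r" "\<forall>t\<in>G \<union> {sigma, JW}. t 0 ^ r 0 * chi I r t = 1" using DV_elim by blast
      have Pr: "P r" using PG x(2) by blast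
      have "sigma 0 ^ r 0 * chi I r sigma = 1" using x(2) by blast
      then have "(-1::complex) ^ r 0 = 1" by (simp add: sig0 sigI)
      then have ev: "even (r 0)" by (simp add: minus_one_power_iff split: if_splits)
      have "JW 0 ^ r 0 * chi I r JW = 1" using x(2) by blast
      then have "chi I r JW = 1" by (simp add: JW0)
      then have "rho M I r \<in> Gs" unfolding Gs_eq using Pr by blast
      then show "x \<in> Gs" using E_even[of r, OF ev] x(1) by simp
    qed
  next
    show "Gs \<subseteq> DV (G \<union> {sigma, JW})" by (rule Gs_DV) (auto simp: P_def sigI)
  qed
  have i1: "gen (G \<union> {sigma}) \<subseteq> gen (G \<union> {sigma, JW})" by (rule gen_mono) blast
  have i2: "gen (G \<union> {dmul sigma JW}) \<subseteq> gen (G \<union> {sigma, JW})"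
  proof (rule gen_sub_gen)
    have "dmul sigma JW \<in> gen (G \<union> {sigma, JW})" by (rule gen_mul[OF incl3(2) incl3(3)])
    then show "G \<union> {dmul sigma JW} \<subseteq> gen (G \<union> {sigma, JW})" using incl3(1) by blast
  qed
  have i3: "gen (G \<union> {JW}) \<subseteq> gen (G \<union> {sigma, JW})" by (rule gen_mono) blast
  have i4: "gen (Gs \<union> {JWs}) \<subseteq> gen (Gs \<union> {sigma, JWs})" by (rule gen_mono) blast
  have i5: "gen (Gs \<union> {dmul sigma JWs}) \<subseteq> gen (Gs \<union> {sigma, JWs})"
  proof (rule gen_sub_gen)
    have "dmul sigma JWs \<in> gen (Gs \<union> {sigma, JWs})" by (rule gen_mul[OF incl3(2) incl3(3)])
    then show "Gs \<union> {dmul sigma JWs} \<subseteq> gen (Gs \<union> {sigma, JWs})" using incl3(1) by blast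
  qed
  have i6: "gen (Gs \<union> {sigma}) \<subseteq> gen (Gs \<union> {sigma, JWs})" by (rule gen_mono) blast
  show ?thesis
    using eq1 eq2 eq3 eq4 eq5 dVG dVgen i1 i2 i3 i4 i5 i6 incl2(1)
    by simp
qed


end
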